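(* The operator $J$ with domain $\mathcal F(\Gamma)$, viewed as a symmetric operator in $\ell^2(\Gamma)$, has defect indices not greater than $1$; i.e. for every nonreal $z$, the space of $v\in\ell^2(\Gamma)$ with $Jv=zv$ has dimension at most $1$.
   Context: Let $\Gamma$ be an infinite connected tree whose vertices are arranged in levels $\ell(x)\in\{0,1,2,\dots\}$: every vertex $x$ is adjacent to exactly one vertex $x'$ with $\ell(x')=\ell(x)+1$; for $\ell(x)\ge 1$ the set $N_x=\{y:\ y'=x\}$ of neighbours of $x$ on level $\ell(x)-1$ is finite and nonempty; $N_x=\emptyset$ if $\ell(x)=0$; there are no other edges. Fix $\lambda_x>0$, $\beta_x\in\mathbb R$ for $x\in\Gamma$. The Jacobi matrix $J$ acts on functions $v:\Gamma\to\mathbb C$ by $(Jv)(x)=\lambda_x v(x')+\beta_x v(x)+\sum_{y\in N_x}\lambda_y v(y)$. $\mathcal F(\Gamma)$ denotes the finitely supported functions on $\Gamma$; $\ell^2(\Gamma)$ has inner product $(u,v)=\sum_{x}u(x)\overline{v(x)}$, and $J$ with domain $\mathcal F(\Gamma)$ is a symmetric operator in $\ell^2(\Gamma)$. *)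

theory Defs
  imports "HOL-Analysis.Analysis"
begin

text \<open>The vertex set of the tree is the whole type 'a. lev x is the level of x,
  par x is the unique neighbour x' of x on level lev x + 1.
  The neighbours of x on level lev x - 1 are the y with par y = x.\<close>

definition lower_nbrs :: "('a \<Rightarrow> 'a) \<Rightarrow> 'a \<Rightarrow> 'a set" where
  "lower_nbrs par x = {y. par y = x}"

definition level_tree :: "('a \<Rightarrow> nat) \<Rightarrow> ('a \<Rightarrow> 'a) \<Rightarrow> bool" where
  "level_tree lev par \<longleftrightarrow>
     infinite (UNIV :: 'a set) \<and>
     (\<forall>x. lev (par x) = lev x + 1) \<and>
     (\<forall>x. lev x \<ge> 1 \<longrightarrow> finite (lower_nbrs par x) \<and> lower_nbrs par x \<noteq> {}) \<and>
     (\<forall>x. lev x = 0 \<longrightarrow> lower_nbrs par x = {}) \<and>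
     (\<forall>x y. \<exists>m n. (par ^^ m) x = (par ^^ n) y)"

definition jacobi :: "('a \<Rightarrow> 'a) \<Rightarrow> ('a \<Rightarrow> real) \<Rightarrow> ('a \<Rightarrow> real)
    \<Rightarrow> ('a \<Rightarrow> complex) \<Rightarrow> 'a \<Rightarrow> complex" where
  "jacobi par lam bet v x =
     complex_of_real (lam x) * v (par x) + complex_of_real (bet x) * v x
     + (\<Sum>y\<in>lower_nbrs par x. complex_of_real (lam y) * v y)"

definition ell2 :: "('a \<Rightarrow> complex) set" where
  "ell2 = {v. (\<lambda>x. (cmod (v x))\<^sup>2) summable_on UNIV}"

definition eigen_space :: "('a \<Rightarrow> 'a) \<Rightarrow> ('a \<Rightarrow> real) \<Rightarrow> ('a \<Rightarrow> real)
    \<Rightarrow> complex \<Rightarrow> ('a \<Rightarrow> complex) set" where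
  "eigen_space par lam bet z = {v \<in> ell2. jacobi par lam bet v = (\<lambda>x. z * v x)}"

end

theory Submission
  imports Defs
begin

lemma im_mult_sq: "Im (z * w * cnj w) = Im z * (cmod w)\<^sup>2"
proof -
  have "Im (z * w * cnj w) = Im z * (Re w ^ 2 + Im w ^ 2)"
    by (simp add: algebra_simps power2_eq_square)
  then show ?thesis by (simp add: cmod_power2)
qed

lemma key_L:
  fixes lev :: "'a \<Rightarrow> nat" and par :: "'a \<Rightarrow> 'a"
  assumes lt: "level_tree lev par" and lp: "\<forall>x. lam x > 0"
    and sol: "jacobi par lam bet v = (\<lambda>x. z * v x)"
  shows "\<exists>S\<ge>0. Im z * ((cmod (v x))\<^sup>2 + S) = lam x * Im (v (par x) * cnj (v x))"
proof (induction "lev x" arbitrary: x rule: less_induct)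
  case less
  let ?C = "lower_nbrs par x"
  have fin: "finite ?C"
    using lt unfolding level_tree_def by (cases "lev x = 0") auto
  have clev: "lev c < lev x" if "c \<in> ?C" for c
    using lt that unfolding level_tree_def lower_nbrs_def by auto
  have "\<forall>c\<in>?C. \<exists>S\<ge>0. Im z * ((cmod (v c))\<^sup>2 + S) = lam c * Im (v (par c) * cnj (v c))"
    using less clev by blast
  then obtain Sf where Sf: "\<And>c. c \<in> ?C \<Longrightarrow> Sf c \<ge> 0 \<and>
      Im z * ((cmod (v c))\<^sup>2 + Sf c) = lam c * Im (v (par c) * cnj (v c))"
    by metis
  have pc: "par c = x" if "c \<in> ?C" for c using that unfolding lower_nbrs_def by auto
  have Sf2: "Im z * ((cmod (v c))\<^sup>2 + Sf c) = - (lam c * Im (v c * cnj (v x)))" if "c \<in> ?C" for c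
  proof -
    have "Im (v x * cnj (v c)) = - Im (v c * cnj (v x))" by simp
    then show ?thesis using Sf[OF that] pc[OF that] by (simp add: algebra_simps)
  qed
  have eq: "z * v x = complex_of_real (lam x) * v (par x) + complex_of_real (bet x) * v x
     + (\<Sum>y\<in>?C. complex_of_real (lam y) * v y)"
    using fun_cong[OF sol, of x] unfolding jacobi_def by simp
  have "Im (z * v x * cnj (v x)) = Im ((complex_of_real (lam x) * v (par x) + complex_of_real (bet x) * v x
     + (\<Sum>y\<in>?C. complex_of_real (lam y) * v y)) * cnj (v x))"
    using eq by simp
  also have "\<dots> = lam x * Im (v (par x) * cnj (v x)) + bet x * Im (v x * cnj (v x))
      + (\<Sum>y\<in>?C. lam y * Im (v y * cnj (v x)))"
    by (simp add: distrib_right sum_distrib_right mult.assoc Im_sum)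
  also have "Im (v x * cnj (v x)) = 0"
    by (simp add: complex_norm_square[symmetric])
  finally have e0: "Im (z * v x * cnj (v x)) = lam x * Im (v (par x) * cnj (v x))
      + (\<Sum>y\<in>?C. lam y * Im (v y * cnj (v x)))" by simp
  have e1: "Im z * (cmod (v x))\<^sup>2 = lam x * Im (v (par x) * cnj (v x))
      + (\<Sum>y\<in>?C. lam y * Im (v y * cnj (v x)))"
    using e0 by (simp only: im_mult_sq)
  define S where "S = (\<Sum>c\<in>?C. (cmod (v c))\<^sup>2 + Sf c)"
  have S0: "S \<ge> 0" unfolding S_def by (rule sum_nonneg) (use Sf in auto)
  have "Im z * S = (\<Sum>c\<in>?C. - (lam c * Im (v c * cnj (v x))))"
    unfolding S_def sum_distrib_left using Sf2 by (rule sum.cong[OF refl])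
  also have "\<dots> = - (\<Sum>c\<in>?C. lam c * Im (v c * cnj (v x)))"
    by (simp add: sum_negf)
  finally have "Im z * ((cmod (v x))\<^sup>2 + S) = lam x * Im (v (par x) * cnj (v x))"
    using e1 by (simp add: distrib_left)
  then show ?case using S0 by blast
qed

lemma vanish_down:
  fixes lev :: "'a \<Rightarrow> nat" and par :: "'a \<Rightarrow> 'a"
  assumes lt: "level_tree lev par" and lp: "\<forall>x. lam x > 0" and iz: "Im z \<noteq> 0"
    and sol: "jacobi par lam bet v = (\<lambda>x. z * v x)"
    and vx: "v x = 0"
  shows "(par ^^ k) y = x \<Longrightarrow> v y = 0"
proof (induction k arbitrary: y)
  case 0 then show ?case using vx by simp
next
  case (Suc k)
  then have "(par ^^ k) (par y) = x" by (simp add: funpow_Suc_right del: funpow.simps)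
  then have "v (par y) = 0" using Suc.IH by blast
  obtain S where S: "S \<ge> 0" "Im z * ((cmod (v y))\<^sup>2 + S) = lam y * Im (v (par y) * cnj (v y))"
    using key_L[OF lt lp sol] by blast
  with \<open>v (par y) = 0\<close> iz have "(cmod (v y))\<^sup>2 + S = 0" by simp
  with S(1) have "(cmod (v y))\<^sup>2 = 0" by (smt (verit) zero_le_power2)
  then show ?case by simp
qed

lemma vanish_up:
  fixes lev :: "'a \<Rightarrow> nat" and par :: "'a \<Rightarrow> 'a"
  assumes lt: "level_tree lev par" and lp: "\<forall>x. lam x > 0" and iz: "Im z \<noteq> 0"
    and sol: "jacobi par lam bet v = (\<lambda>x. z * v x)"
    and vx: "v x = 0"
  shows "v (par x) = 0"
proof -
  have ch: "v c = 0" if "c \<in> lower_nbrs par x" for c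
    using vanish_down[OF lt lp iz sol vx, of 1 c] that unfolding lower_nbrs_def by simp
  have eq: "z * v x = complex_of_real (lam x) * v (par x) + complex_of_real (bet x) * v x
     + (\<Sum>y\<in>lower_nbrs par x. complex_of_real (lam y) * v y)"
    using fun_cong[OF sol, of x] unfolding jacobi_def by simp
  then have "complex_of_real (lam x) * v (par x) = 0" using vx ch by simp
  then show ?thesis using lp by (metis less_irrefl mult_eq_0_iff of_real_eq_0_iff)
qed

lemma vanish_all:
  fixes lev :: "'a \<Rightarrow> nat" and par :: "'a \<Rightarrow> 'a"
  assumes lt: "level_tree lev par" and lp: "\<forall>x. lam x > 0" and iz: "Im z \<noteq> 0"
    and sol: "jacobi par lam bet v = (\<lambda>x. z * v x)"
    and vx: "v x = 0"
  shows "v y = 0"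
proof -
  have up: "v ((par ^^ n) x) = 0" for n
    by (induction n) (auto simp: vx intro: vanish_up[OF lt lp iz sol])
  obtain m n where "(par ^^ m) y = (par ^^ n) x" using lt unfolding level_tree_def by blast
  then show ?thesis using vanish_down[OF lt lp iz sol up[of n]] by blast
qed

theorem proposition2:
  fixes lev :: "'a \<Rightarrow> nat" and par :: "'a \<Rightarrow> 'a"
    and lam bet :: "'a \<Rightarrow> real" and z :: complex
  assumes "level_tree lev par"
    and "\<forall>x. lam x > 0"
    and "Im z \<noteq> 0"
  shows "\<exists>u :: 'a \<Rightarrow> complex. \<forall>v \<in> eigen_space par lam bet z.
           \<exists>c :: complex. v = (\<lambda>x. c * u x)"
proof (cases "\<exists>u\<in>eigen_space par lam bet z. \<exists>x. u x \<noteq> 0")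
  case False
  then show ?thesis by (intro exI[of _ "\<lambda>_. 0"]) auto
next
  case True
  then obtain u x0 where u: "u \<in> eigen_space par lam bet z" "u x0 \<noteq> 0" by blast
  show ?thesis
  proof (intro exI[of _ u] ballI)
    fix v assume v: "v \<in> eigen_space par lam bet z"
    define c where "c = v x0 / u x0"
    define w where "w = (\<lambda>x. v x - c * u x)"
    have su: "jacobi par lam bet u = (\<lambda>x. z * u x)" and sv: "jacobi par lam bet v = (\<lambda>x. z * v x)"
      using u v unfolding eigen_space_def by auto
    have "jacobi par lam bet w = (\<lambda>x. z * w x)"
    proof
      fix x
      have "jacobi par lam bet w x = jacobi par lam bet v x - c * jacobi par lam bet u x"
        unfolding jacobi_def w_def
        by (simp add: algebra_simps sum_subtractf sum_distrib_left)
      then show "jacobi par lam bet w x = z * w x"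
        using fun_cong[OF su, of x] fun_cong[OF sv, of x] by (simp add: w_def algebra_simps)
    qed
    moreover have "w x0 = 0" using u(2) by (simp add: w_def c_def)
    ultimately have "\<And>y. w y = 0" using vanish_all[OF assms] by blast
    then show "\<exists>c. v = (\<lambda>x. c * u x)" by (intro exI[of _ c]) (auto simp: w_def fun_eq_iff)
  qed
qed

end
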